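(* For every $n\equiv 1$ or $3 \pmod 4$ with $n\ge 7$, there exists a Heffter array $H(n;6)$ (indeed one in which every row and column sums, as integers, to $12n+1$).
   Context: A Heffter array $H(n;k)$ is an $n\times n$ array in which some cells are filled with nonzero integers and the others are empty, such that: each row and each column contains exactly $k$ filled cells; the entries of every row and of every column sum to $0$ modulo $2nk+1$; and for each integer $1\le x\le nk$, exactly one of $x$ or $-x$ appears in the array, and it appears exactly once. *)

theory Defs
  imports Main
begin

text \<open>An n x n partially filled array of integers: cell (i,j) with i,j < n is
  either empty (None) or filled with an integer (Some x). Cells outside the
  n x n range are required to be empty.\<close>

type_synonym parray = "nat \<Rightarrow> nat \<Rightarrow> int option"

definition entry_val :: "int option \<Rightarrow> int" where
  "entry_val c = (case c of None \<Rightarrow> 0 | Some x \<Rightarrow> x)"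

definition row_sum :: "nat \<Rightarrow> parray \<Rightarrow> nat \<Rightarrow> int" where
  "row_sum n A i = (\<Sum>j<n. entry_val (A i j))"

definition col_sum :: "nat \<Rightarrow> parray \<Rightarrow> nat \<Rightarrow> int" where
  "col_sum n A j = (\<Sum>i<n. entry_val (A i j))"

definition heffter :: "nat \<Rightarrow> nat \<Rightarrow> parray \<Rightarrow> bool" where
  "heffter n k A \<longleftrightarrow>
     (\<forall>i j. (n \<le> i \<or> n \<le> j) \<longrightarrow> A i j = None) \<and>
     (\<forall>i j x. A i j = Some x \<longrightarrow> x \<noteq> 0) \<and>
     (\<forall>i<n. card {j. j < n \<and> A i j \<noteq> None} = k) \<and>
     (\<forall>j<n. card {i. i < n \<and> A i j \<noteq> None} = k) \<and>
     (\<forall>i<n. row_sum n A i mod int (2*n*k+1) = 0) \<and>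
     (\<forall>j<n. col_sum n A j mod int (2*n*k+1) = 0) \<and>
     (\<forall>x::int. 1 \<le> x \<and> x \<le> int (n*k) \<longrightarrow>
        card {(i,j). i < n \<and> j < n \<and> (A i j = Some x \<or> A i j = Some (-x))} = 1)"

end

theory Submission
  imports Defs
begin

definition dg :: "nat \<Rightarrow> nat" where
  "dg k = (if k=0 then 0 else if k=1 then 2 else if k=2 then 1 else if k=3 then 4 else if k=4 then 6 else 3)"

definition mu :: "nat \<Rightarrow> nat \<Rightarrow> nat \<Rightarrow> nat" where
  "mu n k i = (if k=0 then n-1-i else if k=1 then (i+1) mod n else if k=2 then i
     else if k=3 then n-1-(i+1) mod n else if k=4 then (i+3) mod n else n-1-(i+3) mod n)"

definition absv :: "nat \<Rightarrow> nat \<times> nat \<Rightarrow> nat" where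
  "absv n p = fst p * n + mu n (fst p) (snd p) + 1"

definition sg :: "nat \<Rightarrow> int" where
  "sg k = (if k=0 \<or> k=2 then -1 else 1)"

definition vv :: "nat \<Rightarrow> nat \<times> nat \<Rightarrow> int" where
  "vv n p = sg (fst p) * int (absv n p)"

definition pos :: "nat \<Rightarrow> nat \<times> nat \<Rightarrow> nat \<times> nat" where
  "pos n p = (snd p, (snd p + dg (fst p)) mod n)"

definition SS :: "nat \<Rightarrow> (nat \<times> nat) set" where
  "SS n = {..<6} \<times> {..<n}"

definition HA :: "nat \<Rightarrow> parray" where
  "HA n i j = (if (i,j) \<in> pos n ` SS n then Some (vv n (the_inv_into (SS n) (pos n) (i,j))) else None)"

lemma dg_lt: "dg k \<le> 6"
  by (simp add: dg_def)

lemma dg_inj: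
  assumes "k < 6" "k' < 6" "dg k = dg k'"
  shows "k = k'"
proof -
  have a: "k \<in> {0,1,2,3,4,5}" "k' \<in> {0,1,2,3,4,5}" using assms(1,2) by auto
  show ?thesis using a assms(3) unfolding dg_def by (elim insertE; simp)+
qed

lemma mod_inj:
  fixes i i' a n :: nat
  assumes "i < n" "i' < n" "(i+a) mod n = (i'+a) mod n"
  shows "i = i'"
proof -
  have "\<And>x y::nat. x < n \<Longrightarrow> y < n \<Longrightarrow> x \<le> y \<Longrightarrow> (x+a) mod n = (y+a) mod n \<Longrightarrow> x = y"
  proof -
    fix x y :: nat
    assume h: "x < n" "y < n" "x \<le> y" "(x+a) mod n = (y+a) mod n"
    then have "n dvd (y+a) - (x+a)" using mod_eq_dvd_iff_nat[of "x+a" "y+a" n] by simp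
    then have "n dvd y - x" by simp
    moreover have "y - x < n" using h by simp
    ultimately have "y - x = 0" using nat_dvd_not_less by blast
    then show "x = y" using h by simp
  qed
  then show ?thesis using assms by (metis nat_le_linear)
qed

lemma diag_inj:
  fixes i a b n :: nat
  assumes "a < n" "b < n" "(i+a) mod n = (i+b) mod n"
  shows "a = b"
  using mod_inj[of a n b i] assms by (simp add: add.commute)

lemma shift_equiv:
  fixes i j d n :: nat
  assumes "i < n" "j < n" "d \<le> n"
  shows "(j = (i+d) mod n) \<longleftrightarrow> (i = (j+n-d) mod n)"
proof
  assume h: "j = (i+d) mod n"
  have "(j + n - d) mod n = ((i+d) mod n + (n-d)) mod n" using h assms by simp
  also have "\<dots> = (i + d + (n-d)) mod n" by (simp add: mod_add_left_eq)
  also have "\<dots> = (i + n) mod n" using assms by simp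
  also have "\<dots> = i" using assms by simp
  finally show "i = (j+n-d) mod n" by simp
next
  assume h: "i = (j+n-d) mod n"
  have "(i + d) mod n = ((j+n-d) mod n + d) mod n" using h by simp
  also have "\<dots> = (j + n - d + d) mod n" by (simp add: mod_add_left_eq)
  also have "\<dots> = (j + n) mod n" using assms by simp
  also have "\<dots> = j" using assms by simp
  finally show "j = (i+d) mod n" by simp
qed

lemma pos_inj:
  assumes n: "n \<ge> 7"
  shows "inj_on (pos n) (SS n)"
proof (rule inj_onI)
  fix p q assume p: "p \<in> SS n" and q: "q \<in> SS n" and e: "pos n p = pos n q"
  obtain k i where pk: "p = (k,i)" by (cases p)
  obtain k' i' where qk: "q = (k',i')" by (cases q)
  have e0: "(i, (i + dg k) mod n) = (i', (i' + dg k') mod n)" using e unfolding pk qk pos_def by (simp only: fst_conv snd_conv)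
  have c: "i = i' \<and> (i + dg k) mod n = (i' + dg k') mod n" using e0 unfolding prod.inject .
  have ii: "i = i'" using c by (rule conjunct1)
  have e2: "(i + dg k) mod n = (i + dg k') mod n" using conjunct2[OF c] unfolding ii .
  have a1: "dg k < n" using dg_lt[of k] n by linarith
  have a2: "dg k' < n" using dg_lt[of k'] n by linarith
  have "dg k = dg k'" using diag_inj[OF a1 a2 e2] .
  moreover have k6: "k < 6" using p unfolding pk SS_def by simp
  moreover have k6': "k' < 6" using q unfolding qk SS_def by simp
  ultimately have "k = k'" using dg_inj[OF k6 k6'] by blast
  then show "p = q" using pk qk ii by simp
qed

lemma pos_mem: "(i,j) \<in> pos n ` SS n \<longleftrightarrow> i < n \<and> j < n \<and> (\<exists>k<6. j = (i + dg k) mod n)"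
proof
  assume "(i,j) \<in> pos n ` SS n"
  then obtain k i' where "(k,i') \<in> SS n" "(i,j) = pos n (k,i')" by auto
  then show "i < n \<and> j < n \<and> (\<exists>k<6. j = (i + dg k) mod n)"
    by (auto simp: pos_def SS_def)
next
  assume h: "i < n \<and> j < n \<and> (\<exists>k<6. j = (i + dg k) mod n)"
  then obtain k where "k < 6" "j = (i + dg k) mod n" by auto
  then have "(i,j) = pos n (k,i)" "(k,i) \<in> SS n" using h by (auto simp: pos_def SS_def)
  then show "(i,j) \<in> pos n ` SS n" by blast
qed

lemma HA_Some:
  assumes "n \<ge> 7"
  shows "HA n i j = Some v \<longleftrightarrow> (\<exists>p\<in>SS n. pos n p = (i,j) \<and> v = vv n p)"
proof
  assume "HA n i j = Some v"
  then have m: "(i,j) \<in> pos n ` SS n" and v: "v = vv n (the_inv_into (SS n) (pos n) (i,j))"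
    by (auto simp: HA_def split: if_splits)
  then obtain p where p: "p \<in> SS n" "pos n p = (i,j)" by auto
  then have "the_inv_into (SS n) (pos n) (i,j) = p"
    using the_inv_into_f_f[OF pos_inj[OF assms]] by metis
  then show "\<exists>p\<in>SS n. pos n p = (i,j) \<and> v = vv n p" using p v by auto
next
  assume "\<exists>p\<in>SS n. pos n p = (i,j) \<and> v = vv n p"
  then obtain p where p: "p \<in> SS n" "pos n p = (i,j)" "v = vv n p" by auto
  then have "the_inv_into (SS n) (pos n) (i,j) = p"
    using the_inv_into_f_f[OF pos_inj[OF assms]] by metis
  moreover have "(i,j) \<in> pos n ` SS n" using p by (metis image_eqI)
  ultimately show "HA n i j = Some v" using p by (simp add: HA_def)
qed

lemma HA_None: "HA n i j \<noteq> None \<longleftrightarrow> (i,j) \<in> pos n ` SS n"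
  by (simp add: HA_def)

lemma entry_row:
  assumes n: "n \<ge> 7" and i: "i < n" and j: "j < n"
  shows "entry_val (HA n i j) = (\<Sum>k<6. if j = (i + dg k) mod n then vv n (k,i) else 0)"
proof (cases "(i,j) \<in> pos n ` SS n")
  case True
  then obtain k where k: "k < 6" "j = (i + dg k) mod n" using pos_mem by blast
  have kS: "(k,i) \<in> SS n" using k i by (simp add: SS_def)
  have kp: "pos n (k,i) = (i,j)" using k by (simp add: pos_def)
  have "HA n i j = Some (vv n (k,i))"
    using HA_Some[OF n, of i j "vv n (k,i)"] kS kp by blast
  have eqv: "\<And>k'::nat. k' < 6 \<Longrightarrow> (j = (i + dg k') mod n) \<longleftrightarrow> k' = k"
  proof -
    fix k' :: nat assume k': "k' < 6"
    show "(j = (i + dg k') mod n) \<longleftrightarrow> k' = k"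
    proof
      assume "j = (i + dg k') mod n"
      then have e2: "(i + dg k') mod n = (i + dg k) mod n" using k(2) by simp
      have a1: "dg k' < n" using dg_lt[of k'] n by linarith
      have a2: "dg k < n" using dg_lt[of k] n by linarith
      have "dg k' = dg k" using diag_inj[OF a1 a2 e2] .
      then show "k' = k" using dg_inj[OF k' k(1)] by blast
    next
      assume "k' = k"
      then show "j = (i + dg k') mod n" using k(2) by metis
    qed
  qed
  have "(\<Sum>k'<6. if j = (i + dg k') mod n then vv n (k',i) else 0)
      = (\<Sum>k'<6. if k' = k then vv n (k',i) else 0)"
  proof (rule sum.cong[OF refl])
    fix x assume "x \<in> {..<6::nat}"
    then have "x < 6" by simp
    show "(if j = (i + dg x) mod n then vv n (x,i) else 0) = (if x = k then vv n (x,i) else 0)"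
      by (simp only: eqv[OF \<open>x < 6\<close>])
  qed
  also have "\<dots> = vv n (k,i)"
    by (simp only: sum.delta finite_lessThan lessThan_iff k(1) if_True)
  finally show ?thesis using \<open>HA n i j = Some (vv n (k,i))\<close>
    unfolding entry_val_def by (simp only: option.case)
next
  case False
  then have "HA n i j = None" by (simp add: HA_def)
  moreover have "\<And>k. k < 6 \<Longrightarrow> j \<noteq> (i + dg k) mod n"
  proof
    fix k :: nat assume "k < 6" "j = (i + dg k) mod n"
    then have "(i,j) \<in> pos n ` SS n" using pos_mem[of i j n] i j by blast
    then show False using False by simp
  qed
  note ne = this
  have "(\<Sum>k<6. if j = (i + dg k) mod n then vv n (k,i) else 0) = 0"
  proof (intro sum.neutral ballI)
    fix x assume "x \<in> {..<6::nat}"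
    then have "j \<noteq> (i + dg x) mod n" using ne by blast
    then show "(if j = (i + dg x) mod n then vv n (x,i) else 0) = 0" by (rule if_not_P)
  qed
  ultimately show ?thesis unfolding entry_val_def by (simp only: option.case)
qed

lemma row_sum_HA:
  assumes n: "n \<ge> 7" and i: "i < n"
  shows "row_sum n (HA n) i = (\<Sum>k<6. vv n (k,i))"
proof -
  have "row_sum n (HA n) i = (\<Sum>j<n. \<Sum>k<6. if j = (i + dg k) mod n then vv n (k,i) else 0)"
    unfolding row_sum_def using entry_row[OF n i] by simp
  also have "\<dots> = (\<Sum>k<6. \<Sum>j<n. if j = (i + dg k) mod n then vv n (k,i) else 0)"
    by (rule sum.swap)
  also have "\<dots> = (\<Sum>k<6. vv n (k,i))"
    using n by (intro sum.cong) (auto simp: sum.delta)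
  finally show ?thesis .
qed

lemma col_sum_HA:
  assumes n: "n \<ge> 7" and j: "j < n"
  shows "col_sum n (HA n) j = (\<Sum>k<6. vv n (k,(j + n - dg k) mod n))"
proof -
  have "\<And>i. i < n \<Longrightarrow> entry_val (HA n i j) = (\<Sum>k<6. if i = (j + n - dg k) mod n then vv n (k,i) else 0)"
  proof -
    fix i assume i: "i < n"
    have "entry_val (HA n i j) = (\<Sum>k<6. if j = (i + dg k) mod n then vv n (k,i) else 0)"
      using entry_row[OF n i j] .
    also have "\<dots> = (\<Sum>k<6. if i = (j + n - dg k) mod n then vv n (k,i) else 0)"
    proof (rule sum.cong[OF refl])
      fix x assume "x \<in> {..<6::nat}"
      have "dg x \<le> n" using dg_lt[of x] n by linarith
      then show "(if j = (i + dg x) mod n then vv n (x,i) else 0) = (if i = (j + n - dg x) mod n then vv n (x,i) else 0)"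
        by (simp only: shift_equiv[OF i j])
    qed
    finally show "entry_val (HA n i j) = (\<Sum>k<6. if i = (j + n - dg k) mod n then vv n (k,i) else 0)" .
  qed
  then have "col_sum n (HA n) j = (\<Sum>i<n. \<Sum>k<6. if i = (j + n - dg k) mod n then vv n (k,i) else 0)"
    unfolding col_sum_def by simp
  also have "\<dots> = (\<Sum>k<6. \<Sum>i<n. if i = (j + n - dg k) mod n then vv n (k,i) else 0)"
    by (rule sum.swap)
  also have "\<dots> = (\<Sum>k<6. vv n (k,(j + n - dg k) mod n))"
    using n by (intro sum.cong) (auto simp: sum.delta)
  finally show ?thesis .
qed


lemma sum6: "(\<Sum>k<6. f k) = f 0 + f 1 + f 2 + f 3 + f 4 + (f (5::nat) :: int)"
proof -
  have "{..<6::nat} = {0,1,2,3,4,5}" by auto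
  then show ?thesis by (simp add: add.assoc)
qed

lemma vv_eq: "vv n (k,i) = sg k * (int k * int n + int (mu n k i) + 1)"
  by (simp add: vv_def absv_def)

lemma nsub: "x < n \<Longrightarrow> int (n - 1 - x) = int n - 1 - int x"
  by (simp add: of_nat_diff)

lemma row_arith:
  assumes n: "n \<ge> 7" and i: "i < n"
  shows "(\<Sum>k<6. vv n (k,i)) = int (12*n+1)"
proof -
  define a where "a = (i+1) mod n"
  define b where "b = (i+3) mod n"
  have a: "a < n" "b < n" using n by (simp_all add: a_def b_def)
  have v0: "vv n (0,i) = - (int n - int i)" using i nsub[OF i] by (simp add: vv_eq mu_def sg_def)
  have v1: "vv n (1,i) = int n + int a + 1" by (simp add: vv_eq mu_def sg_def a_def)
  have v2: "vv n (2,i) = - (2 * int n + int i + 1)" by (simp add: vv_eq mu_def sg_def)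
  have mu3: "mu n 3 i = n - 1 - a" by (simp add: mu_def a_def)
  have v3: "vv n (3,i) = 4 * int n - int a" unfolding vv_eq mu3 using nsub[OF a(1)] by (simp add: sg_def)
  have v4: "vv n (4,i) = 4 * int n + int b + 1" by (simp add: vv_eq mu_def sg_def b_def)
  have mu5: "mu n 5 i = n - 1 - b" by (simp add: mu_def b_def)
  have v5: "vv n (5,i) = 6 * int n - int b" unfolding vv_eq mu5 using nsub[OF a(2)] by (simp add: sg_def)
  show ?thesis unfolding sum6 v0 v1 v2 v3 v4 v5 by simp
qed

lemma modML:
  fixes j n a b :: nat
  assumes "b \<le> a" "a \<le> n"
  shows "((j+n-a) mod n + b) mod n = (j+n-(a-b)) mod n"
proof -
  have "((j+n-a) mod n + b) mod n = (j+n-a+b) mod n" by (simp add: mod_add_left_eq)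
  also have "j+n-a+b = j+n-(a-b)" using assms by simp
  finally show ?thesis .
qed

lemma col_arith:
  assumes n: "n \<ge> 7" and j: "j < n"
  shows "(\<Sum>k<6. vv n (k,(j + n - dg k) mod n)) = int (12*n+1)"
proof -
  define c where "c = (j+n-1) mod n"
  define e where "e = (j+n-3) mod n"
  have ce: "c < n" "e < n" using n by (simp_all add: c_def e_def)
  have jj: "(j + n - 0) mod n = j" using j by simp
  have m1: "((j+n-2) mod n + 1) mod n = c" unfolding c_def using modML[of 1 2 n j] n by simp
  have m3: "((j+n-4) mod n + 1) mod n = e" unfolding e_def using modML[of 1 4 n j] n by simp
  have m4: "((j+n-6) mod n + 3) mod n = e" unfolding e_def using modML[of 3 6 n j] n by simp
  have m5: "(e + 3) mod n = j" unfolding e_def using modML[of 3 3 n j] n jj by simp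
  have v0: "vv n (0,(j + n - dg 0) mod n) = - (int n - int j)"
    using nsub[OF j] jj by (simp add: vv_eq mu_def sg_def dg_def)
  have v1: "vv n (1,(j + n - dg 1) mod n) = int n + int c + 1"
    using m1 by (simp add: vv_eq mu_def sg_def dg_def)
  have v2: "vv n (2,(j + n - dg 2) mod n) = - (2 * int n + int c + 1)"
    by (simp add: vv_eq mu_def sg_def dg_def c_def)
  have v3: "vv n (3,(j + n - dg 3) mod n) = 4 * int n - int e"
    using m3 nsub[OF ce(2)] by (simp add: vv_eq mu_def sg_def dg_def)
  have v4: "vv n (4,(j + n - dg 4) mod n) = 4 * int n + int e + 1"
    using m4 by (simp add: vv_eq mu_def sg_def dg_def)
  have v5: "vv n (5,(j + n - dg 5) mod n) = 6 * int n - int j"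
    using m5 nsub[OF j] by (simp add: vv_eq mu_def sg_def dg_def e_def[symmetric])
  show ?thesis unfolding sum6 v0 v1 v2 v3 v4 v5 by simp
qed


lemma row_card:
  assumes n: "n \<ge> 7" and i: "i < n"
  shows "card {j. j < n \<and> HA n i j \<noteq> None} = 6"
proof -
  have "{j. j < n \<and> HA n i j \<noteq> None} = (\<lambda>k. (i + dg k) mod n) ` {..<6}"
  proof (intro equalityI subsetI)
    fix j assume "j \<in> {j. j < n \<and> HA n i j \<noteq> None}"
    then have "(i,j) \<in> pos n ` SS n" using HA_None by blast
    then obtain k where "k < 6" "j = (i + dg k) mod n" using pos_mem by blast
    then show "j \<in> (\<lambda>k. (i + dg k) mod n) ` {..<6}" by blast
  next
    fix j assume "j \<in> (\<lambda>k. (i + dg k) mod n) ` {..<6}"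
    then obtain k where k: "k < 6" "j = (i + dg k) mod n" by blast
    then have jn: "j < n" using n by simp
    then have "(i,j) \<in> pos n ` SS n" using pos_mem[of i j n] i k by blast
    then show "j \<in> {j. j < n \<and> HA n i j \<noteq> None}" using HA_None jn by blast
  qed
  moreover have "inj_on (\<lambda>k. (i + dg k) mod n) {..<6}"
  proof (rule inj_onI)
    fix k k' assume k: "k \<in> {..<6::nat}" "k' \<in> {..<6::nat}" and e: "(i + dg k) mod n = (i + dg k') mod n"
    have a1: "dg k < n" using dg_lt[of k] n by linarith
    have a2: "dg k' < n" using dg_lt[of k'] n by linarith
    have "dg k = dg k'" using diag_inj[OF a1 a2 e] .
    moreover have "k < 6" "k' < 6" using k by auto
    ultimately show "k = k'" using dg_inj by blast
  qed
  ultimately show ?thesis by (simp add: card_image)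
qed

lemma col_card:
  assumes n: "n \<ge> 7" and j: "j < n"
  shows "card {i. i < n \<and> HA n i j \<noteq> None} = 6"
proof -
  have "{i. i < n \<and> HA n i j \<noteq> None} = (\<lambda>k. (j + n - dg k) mod n) ` {..<6}"
  proof (intro equalityI subsetI)
    fix i assume "i \<in> {i. i < n \<and> HA n i j \<noteq> None}"
    then have i: "i < n" and "(i,j) \<in> pos n ` SS n" using HA_None by blast+
    then obtain k where k: "k < 6" "j = (i + dg k) mod n" using pos_mem by blast
    have "dg k \<le> n" using dg_lt[of k] n by linarith
    then have "i = (j + n - dg k) mod n" using shift_equiv[OF i j] k by blast
    then show "i \<in> (\<lambda>k. (j + n - dg k) mod n) ` {..<6}" using k by blast
  next
    fix i assume "i \<in> (\<lambda>k. (j + n - dg k) mod n) ` {..<6}"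
    then obtain k where k: "k < 6" "i = (j + n - dg k) mod n" by blast
    then have i: "i < n" using n by simp
    have "dg k \<le> n" using dg_lt[of k] n by linarith
    then have "j = (i + dg k) mod n" using shift_equiv[OF i j] k by blast
    then have "(i,j) \<in> pos n ` SS n" using pos_mem[of i j n] i j k by blast
    then show "i \<in> {i. i < n \<and> HA n i j \<noteq> None}" using HA_None i by blast
  qed
  moreover have "inj_on (\<lambda>k. (j + n - dg k) mod n) {..<6}"
  proof (rule inj_onI)
    fix k k' assume k: "k \<in> {..<6::nat}" "k' \<in> {..<6::nat}" and e: "(j + n - dg k) mod n = (j + n - dg k') mod n"
    define i where "i = (j + n - dg k) mod n"
    have i: "i < n" using n by (simp add: i_def)
    have a1: "dg k < n" using dg_lt[of k] n by linarith
    have a2: "dg k' < n" using dg_lt[of k'] n by linarith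
    have "j = (i + dg k) mod n" using shift_equiv[OF i j, of "dg k"] a1 i_def by simp
    moreover have "j = (i + dg k') mod n" using shift_equiv[OF i j, of "dg k'"] a2 i_def e by simp
    ultimately have e2: "(i + dg k) mod n = (i + dg k') mod n" by simp
    have "dg k = dg k'" using diag_inj[OF a1 a2 e2] .
    moreover have "k < 6" "k' < 6" using k by auto
    ultimately show "k = k'" using dg_inj by blast
  qed
  ultimately show ?thesis by (simp add: card_image)
qed

lemma mu_lt: "n \<ge> 7 \<Longrightarrow> i < n \<Longrightarrow> mu n k i < n"
  by (simp add: mu_def)

lemma nsub_inj: "x < (n::nat) \<Longrightarrow> y < n \<Longrightarrow> n - 1 - x = n - 1 - y \<Longrightarrow> x = y"
  by arith

lemma mu_inj:
  assumes n: "n \<ge> 7" and i: "i < n" "i' < n" and e: "mu n k i = mu n k i'"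
  shows "i = i'"
proof -
  have l: "(i+1) mod n < n" "(i'+1) mod n < n" "(i+3) mod n < n" "(i'+3) mod n < n" using n by simp_all
  consider "k = 0" | "k = 1" | "k = 2" | "k = 3" | "k = 4" | "k \<ge> 5" by linarith
  then show ?thesis
  proof cases
    case 1 then show ?thesis using e i nsub_inj[of i n i'] by (simp add: mu_def)
  next
    case 2 then show ?thesis using e i mod_inj[of i n i' 1] by (simp add: mu_def)
  next
    case 3 then show ?thesis using e by (simp add: mu_def)
  next
    case 4
    then have "n - 1 - (i+1) mod n = n - 1 - (i'+1) mod n" using e by (simp add: mu_def)
    then have "(i+1) mod n = (i'+1) mod n" using nsub_inj l(1,2) by blast
    then show ?thesis using mod_inj[of i n i' 1] i by simp
  next
    case 5 then show ?thesis using e i mod_inj[of i n i' 3] by (simp add: mu_def)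
  next
    case 6
    then have "n - 1 - (i+3) mod n = n - 1 - (i'+3) mod n" using e by (simp add: mu_def)
    then have "(i+3) mod n = (i'+3) mod n" using nsub_inj l(3,4) by blast
    then show ?thesis using mod_inj[of i n i' 3] i by simp
  qed
qed

lemma divmod_uniq:
  fixes a b c d n :: nat
  assumes "b < n" "d < n" "a*n + b = c*n + d"
  shows "a = c \<and> b = d"
proof -
  have "(a*n+b) div n = a" using assms(1) by simp
  moreover have "(c*n+d) div n = c" using assms(2) by simp
  moreover have "(a*n+b) mod n = b" using assms(1) by simp
  moreover have "(c*n+d) mod n = d" using assms(2) by simp
  ultimately show ?thesis using assms(3) by metis
qed

lemma absv_inj:
  assumes n: "n \<ge> 7"
  shows "inj_on (absv n) (SS n)"
proof (rule inj_onI)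
  fix p q assume p: "p \<in> SS n" and q: "q \<in> SS n" and e: "absv n p = absv n q"
  obtain k i where pk: "p = (k,i)" by (cases p)
  obtain k' i' where qk: "q = (k',i')" by (cases q)
  have i: "i < n" "i' < n" using p q pk qk by (auto simp: SS_def)
  have "k*n + mu n k i = k'*n + mu n k' i'" using e pk qk by (simp add: absv_def)
  then have "k = k' \<and> mu n k i = mu n k' i'"
    using divmod_uniq mu_lt[OF n i(1)] mu_lt[OF n i(2)] by blast
  then show "p = q" using mu_inj[OF n i] pk qk by auto
qed

lemma absv_img:
  assumes n: "n \<ge> 7"
  shows "absv n ` SS n = {1..6*n}"
proof (rule card_subset_eq)
  show "finite {1..6*n}" by simp
  show "absv n ` SS n \<subseteq> {1..6*n}"
  proof
    fix x assume "x \<in> absv n ` SS n"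
    then obtain k i where ki: "k < 6" "i < n" "x = k*n + mu n k i + 1" by (auto simp: SS_def absv_def)
    have "k*n \<le> 5*n" using ki(1) by simp
    moreover have "mu n k i < n" using mu_lt[OF n ki(2)] .
    ultimately have "x \<le> 6*n" using ki(3) by linarith
    then show "x \<in> {1..6*n}" using ki(3) by simp
  qed
  show "card (absv n ` SS n) = card {1..6*n}"
    using card_image[OF absv_inj[OF n]] by (simp add: SS_def card_cartesian_product)
qed

lemma vv_abs: "vv n p = int (absv n p) \<or> vv n p = - int (absv n p)"
  by (simp add: vv_def sg_def)

lemma vv_nz: "vv n p \<noteq> 0"
proof -
  have "absv n p \<ge> 1" by (simp add: absv_def)
  then show ?thesis using vv_abs[of n p] by auto
qed

lemma val_card:
  assumes n: "n \<ge> 7" and x: "1 \<le> x" "x \<le> int (n*6)"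
  shows "card {(i,j). i < n \<and> j < n \<and> (HA n i j = Some x \<or> HA n i j = Some (-x))} = 1"
proof -
  have "nat x \<in> {1..6*n}" using x by auto
  then obtain p0 where p0: "p0 \<in> SS n" "absv n p0 = nat x" using absv_img[OF n] by (metis imageE)
  have ax: "int (absv n p0) = x" using p0 x by simp
  have "{(i,j). i < n \<and> j < n \<and> (HA n i j = Some x \<or> HA n i j = Some (-x))} = {pos n p0}"
  proof (intro equalityI subsetI)
    fix c assume c: "c \<in> {(i,j). i < n \<and> j < n \<and> (HA n i j = Some x \<or> HA n i j = Some (-x))}"
    obtain i j where cij: "c = (i,j)" by (cases c)
    have "\<exists>v. HA n i j = Some v \<and> (v = x \<or> v = -x)" using c cij by auto
    then obtain v where v: "HA n i j = Some v" "v = x \<or> v = -x" by blast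
    then obtain p where p: "p \<in> SS n" "pos n p = (i,j)" "v = vv n p" using HA_Some[OF n] by blast
    have "int (absv n p) = x" using vv_abs[of n p] p(3) v(2) x(1) by auto
    then have "absv n p = absv n p0" using ax by simp
    then have "p = p0" using inj_onD[OF absv_inj[OF n]] p(1) p0(1) by blast
    then show "c \<in> {pos n p0}" using p(2) cij by simp
  next
    fix c assume "c \<in> {pos n p0}"
    then have c: "c = pos n p0" by simp
    obtain i j where cij: "c = (i,j)" by (cases c)
    have ij: "i < n" "j < n" using p0(1) c cij n by (auto simp: SS_def pos_def)
    have "HA n i j = Some (vv n p0)" using HA_Some[OF n] p0(1) c cij by metis
    moreover have "vv n p0 = x \<or> vv n p0 = -x" using vv_abs[of n p0] ax by simp
    ultimately show "c \<in> {(i,j). i < n \<and> j < n \<and> (HA n i j = Some x \<or> HA n i j = Some (-x))}"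
      using ij cij by auto
  qed
  then show ?thesis by simp
qed

theorem lemma3p1:
  fixes n :: nat
  assumes "n mod 4 = 1 \<or> n mod 4 = 3" and "n \<ge> 7"
  shows "\<exists>A. heffter n 6 A \<and>
           (\<forall>i<n. row_sum n A i = int (12*n+1)) \<and>
           (\<forall>j<n. col_sum n A j = int (12*n+1))"
proof -
  have n: "n \<ge> 7" using assms(2) .
  have rs: "\<forall>i<n. row_sum n (HA n) i = int (12*n+1)"
    using row_sum_HA[OF n] row_arith[OF n] by simp
  have cs: "\<forall>j<n. col_sum n (HA n) j = int (12*n+1)"
    using col_sum_HA[OF n] col_arith[OF n] by simp
  have out: "\<forall>i j. (n \<le> i \<or> n \<le> j) \<longrightarrow> HA n i j = None"
  proof (intro allI impI)
    fix i j assume "n \<le> i \<or> n \<le> j"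
    then have "(i,j) \<notin> pos n ` SS n" using pos_mem[of i j n] by auto
    then show "HA n i j = None" by (simp add: HA_def)
  qed
  have nz: "\<forall>i j x. HA n i j = Some x \<longrightarrow> x \<noteq> 0"
  proof (intro allI impI)
    fix i j x assume "HA n i j = Some x"
    then obtain p where "x = vv n p" using HA_Some[OF n] by blast
    then show "x \<noteq> 0" using vv_nz by simp
  qed
  have "heffter n 6 (HA n)"
    unfolding heffter_def
    using out nz row_card[OF n] col_card[OF n] rs cs val_card[OF n] by simp
  then show ?thesis using rs cs by blast
qed

end
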